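(* For each integer $d\geq 1$ there is a constant $b_d>1$ such that the following holds. Let $G$ be a graph without isolated vertices and of maximum degree at most $d$, and let $U\subseteq V(G)$. Then $|\varphi(G)\leftarrow U|\leq |\varphi(G)|/2^{|U|/b_d}$.
   Context: For a graph $G$ without isolated vertices, $\varphi(G)$ is the CNF whose variables are the vertices of $G$ and whose clauses are $(u\vee v)$ for all edges $\{u,v\}\in E(G)$. Boolean functions are identified with their sets of satisfying assignments (sets of literals, one per variable), and $|\cdot|$ denotes the number of satisfying assignments. For $U\subseteq V(G)$, $\varphi(G)\leftarrow U$ denotes the set of satisfying assignments of $\varphi(G)$ that assign every variable of $U$ the value true. *)

theory Defs
  imports Complex_Main
begin

definition simple_graph :: "'a set \<Rightarrow> ('a \<Rightarrow> 'a \<Rightarrow> bool) \<Rightarrow> bool" where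
  "simple_graph V E \<longleftrightarrow> finite V \<and> (\<forall>u v. E u v \<longrightarrow> u \<in> V \<and> v \<in> V)
     \<and> (\<forall>u v. E u v \<longrightarrow> E v u) \<and> (\<forall>u. \<not> E u u)"

definition no_isolated :: "'a set \<Rightarrow> ('a \<Rightarrow> 'a \<Rightarrow> bool) \<Rightarrow> bool" where
  "no_isolated V E \<longleftrightarrow> (\<forall>v\<in>V. \<exists>u\<in>V. E v u)"

definition degree :: "'a set \<Rightarrow> ('a \<Rightarrow> 'a \<Rightarrow> bool) \<Rightarrow> 'a \<Rightarrow> nat" where
  "degree V E v = card {u\<in>V. E v u}"

definition max_degree_le :: "'a set \<Rightarrow> ('a \<Rightarrow> 'a \<Rightarrow> bool) \<Rightarrow> nat \<Rightarrow> bool" where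
  "max_degree_le V E d \<longleftrightarrow> (\<forall>v\<in>V. degree V E v \<le> d)"

(* Satisfying assignments of phi(G) = AND over edges {u,v} of (u OR v).
   An assignment (one literal per variable) is represented by the set S \<subseteq> V
   of variables assigned true. *)
definition phi_models :: "'a set \<Rightarrow> ('a \<Rightarrow> 'a \<Rightarrow> bool) \<Rightarrow> 'a set set" where
  "phi_models V E = {S. S \<subseteq> V \<and> (\<forall>u v. E u v \<longrightarrow> u \<in> S \<or> v \<in> S)}"

definition phi_models_forced :: "'a set \<Rightarrow> ('a \<Rightarrow> 'a \<Rightarrow> bool) \<Rightarrow> 'a set \<Rightarrow> 'a set set" where
  "phi_models_forced V E U = {S \<in> phi_models V E. U \<subseteq> S}"

end

theory Submission
  imports Defs
begin

lemma models_finite: "simple_graph V E \<Longrightarrow> finite (phi_models V E)"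
  unfolding simple_graph_def phi_models_def
  by (rule finite_subset[of _ "Pow V"]) auto

lemma forced_empty: "phi_models_forced V E {} = phi_models V E"
  unfolding phi_models_forced_def by auto

lemma step:
  assumes g: "simple_graph V E" and md: "max_degree_le V E d" and uU: "u \<in> U" and UV: "U \<subseteq> V"
  shows "(1 + 1 / 2 ^ d) * real (card (phi_models_forced V E U))
     \<le> real (card (phi_models_forced V E (U - insert u {v\<in>V. E u v})))"
proof -
  define N where "N = {v\<in>V. E u v}"
  define U' where "U' = U - insert u N"
  define M where "M = phi_models V E"
  define A where "A = {S\<in>M. insert u U' \<subseteq> S}"
  define B where "B = {S\<in>M. U' \<subseteq> S \<and> u \<notin> S}"
  define C where "C = {S\<in>M. insert u (U' \<union> N) \<subseteq> S}"
  have finM: "finite M" using models_finite[OF g] M_def by simp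
  have gV: "finite V" "\<And>x y. E x y \<Longrightarrow> x \<in> V \<and> y \<in> V" "\<And>x y. E x y \<Longrightarrow> E y x" "\<And>x. \<not> E x x"
    using g unfolding simple_graph_def by auto
  have uV: "u \<in> V" using uU UV by auto
  have cN: "card N \<le> d" using md uV unfolding max_degree_le_def degree_def N_def by auto
  have finN: "finite N" using gV(1) N_def by auto
  have finA: "finite A" "finite B" "finite C" using finM A_def B_def C_def by auto
  have FU: "phi_models_forced V E U \<subseteq> A"
    unfolding phi_models_forced_def A_def M_def U'_def using uU by auto
  have FU': "phi_models_forced V E U' = A \<union> B"
    unfolding phi_models_forced_def A_def B_def M_def U'_def by auto
  have disj: "A \<inter> B = {}" unfolding A_def B_def by auto
  have AC: "card A \<le> card (C \<times> Pow N)"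
  proof (rule card_inj_on_le[where f="\<lambda>S. (S \<union> N, S \<inter> N)"])
    show "inj_on (\<lambda>S. (S \<union> N, S \<inter> N)) A"
    proof (rule inj_onI)
      fix S T assume "(S \<union> N, S \<inter> N) = (T \<union> N, T \<inter> N)"
      hence "S \<union> N = T \<union> N" "S \<inter> N = T \<inter> N" by auto
      thus "S = T" by blast
    qed
    show "(\<lambda>S. (S \<union> N, S \<inter> N)) ` A \<subseteq> C \<times> Pow N"
    proof
      fix x assume "x \<in> (\<lambda>S. (S \<union> N, S \<inter> N)) ` A"
      then obtain S where S: "S \<in> A" "x = (S \<union> N, S \<inter> N)" by auto
      have "S \<union> N \<in> M" using S(1) unfolding A_def M_def phi_models_def N_def by auto
      thus "x \<in> C \<times> Pow N" using S unfolding A_def C_def by auto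
    qed
    show "finite (C \<times> Pow N)" using finA finN by auto
  qed
  have e1: "card (C \<times> Pow N) = card C * 2 ^ card N" using finN by (simp add: card_cartesian_product card_Pow)
  have e2: "(2::nat) ^ card N \<le> 2 ^ d" using cN by (rule power_increasing) auto
  have "card C * 2 ^ card N \<le> card C * 2 ^ d" using e2 by (rule mult_le_mono2)
  hence AC2: "card A \<le> card C * 2 ^ d" using AC e1 by linarith
  have CB: "card C \<le> card B"
  proof (rule card_inj_on_le[where f="\<lambda>S. S - {u}"])
    show "inj_on (\<lambda>S. S - {u}) C"
      unfolding C_def by (rule inj_onI) (metis insert_Diff insert_subset mem_Collect_eq)
    show "(\<lambda>S. S - {u}) ` C \<subseteq> B"
    proof
      fix x assume "x \<in> (\<lambda>S. S - {u}) ` C"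
      then obtain S where S: "S \<in> C" "x = S - {u}" by auto
      have SM: "S \<subseteq> V" "\<And>a b. E a b \<Longrightarrow> a \<in> S \<or> b \<in> S" "N \<subseteq> S"
        using S(1) unfolding C_def M_def phi_models_def by auto
      have "\<forall>a b. E a b \<longrightarrow> a \<in> S - {u} \<or> b \<in> S - {u}"
      proof (intro allI impI)
        fix a b assume e: "E a b"
        show "a \<in> S - {u} \<or> b \<in> S - {u}"
        proof (cases "a = u")
          case True
          hence "b \<in> N" "b \<noteq> u" using e gV unfolding N_def by auto
          thus ?thesis using SM by auto
        next
          case F: False
          show ?thesis
          proof (cases "b = u")
            case True
            hence "a \<in> N" using e gV unfolding N_def by blast
            thus ?thesis using SM F by auto
          next
            case False thus ?thesis using e SM(2) F by auto
          qed
        qed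
      qed
      hence "S - {u} \<in> M" using SM(1) unfolding M_def phi_models_def by auto
      moreover have "U' \<subseteq> S - {u}" using S(1) unfolding C_def U'_def by auto
      ultimately show "x \<in> B" using S unfolding B_def by auto
    qed
    show "finite B" using finA by auto
  qed
  have c1: "real (card (phi_models_forced V E U)) \<le> card A"
    using card_mono[OF finA(1) FU] by auto
  have "card C * 2 ^ d \<le> card B * 2 ^ d" using CB by (rule mult_le_mono1)
  hence "card A \<le> card B * 2 ^ d" using AC2 by linarith
  hence "real (card A) \<le> real (card B * 2 ^ d)" by (simp only: of_nat_le_iff)
  hence c2: "real (card A) \<le> 2 ^ d * card B" by (simp add: mult.commute)
  have c3: "card (phi_models_forced V E U') = card A + card B"
    using FU' card_Un_disjoint[OF finA(1) finA(2) disj] by simp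
  have "(1 + 1 / 2 ^ d) * real (card (phi_models_forced V E U)) \<le> (1 + 1 / 2 ^ d) * card A"
    using c1 by (intro mult_left_mono) auto
  also have "\<dots> = card A + card A / 2 ^ d" by (simp add: algebra_simps)
  also have "\<dots> \<le> card A + card B" using c2 by (simp add: divide_le_eq mult.commute)
  finally show ?thesis using c3 unfolding U'_def N_def by simp
qed

lemma main:
  fixes r :: real
  assumes g: "simple_graph V E" and md: "max_degree_le V E d"
    and r: "r = 1 + 1 / 2 ^ d"
  shows "U \<subseteq> V \<Longrightarrow> real (card (phi_models_forced V E U)) * r powr (real (card U) / (d + 1))
           \<le> real (card (phi_models V E))"
proof (induction "card U" arbitrary: U rule: less_induct)
  case less
  have r1: "r \<ge> 1" using r by simp
  show ?case
  proof (cases "U = {}")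
    case True thus ?thesis using forced_empty[of V E] by simp
  next
    case False
    then obtain u where uU: "u \<in> U" by auto
    define U' where "U' = U - insert u {v\<in>V. E u v}"
    have uV: "u \<in> V" using uU less.prems by auto
    have finU: "finite U" using less.prems g unfolding simple_graph_def using finite_subset by auto
    have finN: "finite {v\<in>V. E u v}" using g unfolding simple_graph_def by auto
    have cN: "card {v\<in>V. E u v} \<le> d" using md uV unfolding max_degree_le_def degree_def by auto
    have "U' \<subseteq> U - {u}" unfolding U'_def by auto
    hence "card U' \<le> card (U - {u})" using finU by (intro card_mono) auto
    moreover have "card (U - {u}) < card U" by (rule card_Diff1_less[OF finU uU])
    ultimately have lt: "card U' < card U" by linarith
    have sub: "U' \<subseteq> V" using less.prems U'_def by auto
    have IH: "real (card (phi_models_forced V E U')) * r powr (real (card U') / (d + 1))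
           \<le> real (card (phi_models V E))" using less.hyps[OF lt sub] .
    have st: "r * real (card (phi_models_forced V E U)) \<le> real (card (phi_models_forced V E U'))"
      using step[OF g md uU less.prems] r U'_def by simp
    have "U \<subseteq> U' \<union> insert u {v\<in>V. E u v}" unfolding U'_def by auto
    hence "card U \<le> card (U' \<union> insert u {v\<in>V. E u v})" using finU finN unfolding U'_def by (intro card_mono) auto
    also have "\<dots> \<le> card U' + card (insert u {v\<in>V. E u v})" by (rule card_Un_le)
    also have "card (insert u {v\<in>V. E u v}) \<le> d + 1" using cN card_insert_if[OF finN, of u] by auto
    finally have cU: "real (card U) \<le> real (card U') + (d + 1)" by linarith
    have "real (card U) / (d + 1) \<le> (real (card U') + (d + 1)) / (d + 1)"
      using cU by (intro divide_right_mono) auto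
    hence "real (card U) / (d + 1) \<le> real (card U') / (d + 1) + 1"
      by (simp add: add_divide_distrib)
    hence "r powr (real (card U) / (d + 1)) \<le> r powr (real (card U') / (d + 1) + 1)"
      using r1 by (intro powr_mono) auto
    also have "\<dots> = r powr (real (card U') / (d + 1)) * r" using r1 by (simp add: powr_add)
    finally have pw: "r powr (real (card U) / (d + 1)) \<le> r powr (real (card U') / (d + 1)) * r" .
    have "real (card (phi_models_forced V E U)) * r powr (real (card U) / (d + 1))
        \<le> real (card (phi_models_forced V E U)) * (r powr (real (card U') / (d + 1)) * r)"
      using pw by (intro mult_left_mono) auto
    also have "\<dots> = (r * real (card (phi_models_forced V E U))) * r powr (real (card U') / (d + 1))"
      by (simp add: algebra_simps)
    also have "\<dots> \<le> real (card (phi_models_forced V E U')) * r powr (real (card U') / (d + 1))"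
      using st by (intro mult_right_mono) auto
    finally show ?thesis using IH by linarith
  qed
qed

theorem theorem4:
  fixes d :: nat
  assumes "d \<ge> 1"
  shows "\<exists>b::real. b > 1 \<and>
    (\<forall>(V :: nat set) (E :: nat \<Rightarrow> nat \<Rightarrow> bool) U.
       simple_graph V E \<and> no_isolated V E \<and> max_degree_le V E d \<and> U \<subseteq> V \<longrightarrow>
       real (card (phi_models_forced V E U))
         \<le> real (card (phi_models V E)) / 2 powr (real (card U) / b))"
proof -
  define r :: real where "r = 1 + 1 / 2 ^ d"
  have r1: "r > 1" unfolding r_def by simp
  have r2: "r < 2" unfolding r_def using assms by (simp add: power_le_one_iff)
  define l where "l = log 2 r"
  have l0: "0 < l" "l < 1" unfolding l_def using r1 r2 by auto
  define b where "b = (d + 1) / l"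
  have b1: "b > 1" unfolding b_def using l0 assms by (simp add: less_divide_eq)
  have key: "\<And>x. 2 powr (x / b) = r powr (x / (d + 1))"
  proof -
    fix x :: real
    have "2 powr (x / b) = 2 powr (l * (x / (d + 1)))" unfolding b_def using l0 by (simp add: field_simps)
    also have "\<dots> = (2 powr l) powr (x / (d + 1))" by (simp add: powr_powr)
    also have "2 powr l = r" unfolding l_def using r1 by simp
    finally show "2 powr (x / b) = r powr (x / (d + 1))" .
  qed
  show ?thesis
  proof (intro exI[of _ b] conjI allI impI)
    show "b > 1" by fact
    fix V :: "nat set" and E U
    assume h: "simple_graph V E \<and> no_isolated V E \<and> max_degree_le V E d \<and> U \<subseteq> V"
    have "real (card (phi_models_forced V E U)) * r powr (real (card U) / (d + 1))
           \<le> real (card (phi_models V E))" using main[of V E d r U] h r_def by auto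
    moreover have "r powr (real (card U) / (d + 1)) > 0" using r1 by simp
    ultimately show "real (card (phi_models_forced V E U))
         \<le> real (card (phi_models V E)) / 2 powr (real (card U) / b)"
      unfolding key by (simp add: le_divide_eq)
  qed
qed

end
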